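(* Let $n$ be a positive integer and let $\mathcal{D}$ be a set of positive divisors of $n/\mathrm{rad}(n)$ which is product-free as a set of integers (i.e. there are no $d_1,d_2,d_3\in\mathcal{D}$ with $d_1d_2=d_3$). Then the set $$ S_{\mathcal{D}} := \{ s\in \mathbb{Z}/n\mathbb{Z} : \gcd(s,n)\in \mathcal{D}\} $$ is a product-free subset of $\mathbb{Z}/n\mathbb{Z}$, and $$ |S_{\mathcal{D}}| = \varphi(n)\sum_{d\in\mathcal{D}}\frac1d . $$
   Context: $\mathrm{rad}(n)$ denotes the largest squarefree divisor of $n$ (the product of the distinct primes dividing $n$), and $\varphi$ is Euler's totient function. For $s\in\mathbb{Z}/n\mathbb{Z}$, $\gcd(s,n)$ means the gcd of $n$ with any integer representative of $s$ (well defined). A subset $S\subseteq \mathbb{Z}/n\mathbb{Z}$ is product-free if there are no $a,b,c\in S$ (not necessarily distinct) with $ab\equiv c\pmod n$. *)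

theory Defs
  imports "HOL-Number_Theory.Number_Theory"
begin

definition rad :: "nat \<Rightarrow> nat" where
  "rad n = (\<Prod>p\<in>prime_factors n. p)"

definition int_product_free :: "nat set \<Rightarrow> bool" where
  "int_product_free D \<longleftrightarrow> \<not> (\<exists>d1\<in>D. \<exists>d2\<in>D. \<exists>d3\<in>D. d1 * d2 = d3)"

text \<open>Z/nZ is represented by the residues {0..<n}; product-free subset.\<close>
definition mod_product_free :: "nat \<Rightarrow> nat set \<Rightarrow> bool" where
  "mod_product_free n S \<longleftrightarrow>
     S \<subseteq> {0..<n} \<and> \<not> (\<exists>a\<in>S. \<exists>b\<in>S. \<exists>c\<in>S. (a * b) mod n = c)"

definition S_D :: "nat \<Rightarrow> nat set \<Rightarrow> nat set" where
  "S_D n D = {s \<in> {0..<n}. gcd s n \<in> D}"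

end

theory Submission
  imports Defs
begin

lemma rad_dvd: assumes "(n::nat) > 0" shows "rad n dvd n"
proof -
  have "rad n dvd (\<Prod>p\<in>prime_factors n. p ^ multiplicity p n)"
    unfolding rad_def by (rule prod_dvd_prod) (auto simp: prime_factors_multiplicity intro: dvd_power)
  also have "\<dots> = n" using assms by (simp add: prime_factorization_nat[symmetric])
  finally show ?thesis .
qed

lemma prime_dvd_rad: assumes "prime p" "p dvd n" "(n::nat) > 0" shows "p dvd rad n"
  unfolding rad_def by (rule dvd_prodI) (use assms in \<open>auto simp: prime_factors_dvd\<close>)

lemma mul_prime_dvd:
  assumes "(n::nat) > 0" "d * rad n dvd n" "prime p" "p dvd n"
  shows "d * p dvd n"
proof -
  have "d * p dvd d * rad n" using prime_dvd_rad[OF assms(3,4,1)] by simp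
  thus ?thesis using assms(2) by (rule dvd_trans)
qed

lemma exists_prime_dvd: assumes "(m::nat) \<noteq> 1" obtains p where "prime p" "p dvd m"
  using assms prime_factor_nat by blast

lemma coprime_part:
  assumes "(n::nat) > 0" "gcd a n = d" "d * rad n dvd n"
  shows "\<exists>a'. a = d * a' \<and> coprime a' n"
proof -
  have "d dvd a" unfolding assms(2)[symmetric] by (rule gcd_dvd1)
  then obtain a' where a: "a = d * a'" by (elim dvdE)
  have dpos: "d > 0" using assms(1) unfolding assms(2)[symmetric] by simp
  have "coprime a' n"
  proof (rule ccontr)
    assume "\<not> coprime a' n"
    hence "gcd a' n \<noteq> 1" using coprime_iff_gcd_eq_1 by blast
    then obtain p where p: "prime p" "p dvd gcd a' n" by (rule exists_prime_dvd)
    hence "p dvd a'" "p dvd n" using dvd_trans gcd_dvd1 gcd_dvd2 by blast+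
    have "d * p dvd n" using mul_prime_dvd[OF assms(1,3) p(1) \<open>p dvd n\<close>] .
    moreover have "d * p dvd a" using \<open>p dvd a'\<close> a by simp
    ultimately have "d * p dvd gcd a n" by (intro gcd_greatest)
    hence "d * p dvd d" unfolding assms(2) .
    hence "p dvd 1" using dpos by simp
    thus False using p(1) by simp
  qed
  thus ?thesis using a by blast
qed

lemma final_step:
  assumes "(n::nat) > 0" "gcd (d1*d2) n = d3" "d3 * rad n dvd n" "d1 dvd n" "d2 dvd n"
    "d1 > 0" "d2 > 0"
  shows "d1 * d2 = d3"
proof -
  have "d3 dvd d1 * d2" unfolding assms(2)[symmetric] by (rule gcd_dvd1)
  then obtain e where e: "d1 * d2 = d3 * e" by (elim dvdE)
  have d3pos: "d3 > 0" using assms(1) unfolding assms(2)[symmetric] by simp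
  have "e = 1"
  proof (rule ccontr)
    assume "e \<noteq> 1"
    then obtain p where p: "prime p" "p dvd e" by (rule exists_prime_dvd)
    have "p dvd d1 * d2" using e p(2) by simp
    hence "p dvd d1 \<or> p dvd d2" using p(1) by (simp add: prime_dvd_mult_iff)
    hence "p dvd n" using assms(4,5) dvd_trans by blast
    have "d3 * p dvd n" using mul_prime_dvd[OF assms(1,3) p(1) \<open>p dvd n\<close>] .
    moreover have "d3 * p dvd d1 * d2" using e p(2) by simp
    ultimately have "d3 * p dvd gcd (d1*d2) n" by (intro gcd_greatest)
    hence "d3 * p dvd d3" unfolding assms(2) .
    hence "p dvd 1" using d3pos by simp
    thus False using p(1) by simp
  qed
  thus ?thesis using e by simp
qed

lemma rad_eq_1: assumes "(n::nat) > 0" "rad n = 1" shows "n = 1"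
proof (rule ccontr)
  assume "n \<noteq> 1"
  then obtain p where p: "prime p" "p dvd n" by (rule exists_prime_dvd)
  hence "p dvd rad n" using prime_dvd_rad assms by blast
  thus False using assms p by simp
qed

theorem lemma2p3:
  fixes n :: nat and D :: "nat set"
  assumes "n > 0"
    and "\<forall>d\<in>D. d > 0 \<and> d dvd (n div rad n)"
    and "int_product_free D"
  shows "mod_product_free n (S_D n D) \<and>
         real (card (S_D n D)) = real (totient n) * (\<Sum>d\<in>D. 1 / real d)"
proof -
  have rn: "rad n dvd n" using rad_dvd assms(1) by blast
  have Dr: "d * rad n dvd n" if "d \<in> D" for d
  proof -
    have "d dvd n div rad n" using assms(2) that by auto
    then obtain k where k: "n div rad n = d * k" by (elim dvdE)
    have "n = n div rad n * rad n" using rn by simp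
    also have "\<dots> = d * rad n * k" using k by (simp add: ac_simps)
    finally show ?thesis by (metis dvd_triv_left)
  qed
  have Dn: "d dvd n" if "d \<in> D" for d using Dr[OF that] by (rule dvd_mult_left)
  have Dpos: "d > 0" if "d \<in> D" for d using assms(2) that by auto
  have pf: "\<not> (d1 \<in> D \<and> d2 \<in> D \<and> d1 * d2 \<in> D)" for d1 d2
    using assms(3) unfolding int_product_free_def by blast
  have part1: "mod_product_free n (S_D n D)"
    unfolding mod_product_free_def
  proof (intro conjI notI)
    show "S_D n D \<subseteq> {0..<n}" unfolding S_D_def by auto
  next
    assume "\<exists>a\<in>S_D n D. \<exists>b\<in>S_D n D. \<exists>c\<in>S_D n D. a * b mod n = c"
    then obtain a b c where abc: "a \<in> S_D n D" "b \<in> S_D n D" "c \<in> S_D n D" "a * b mod n = c"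
      by blast
    define d1 where "d1 = gcd a n"
    define d2 where "d2 = gcd b n"
    define d3 where "d3 = gcd c n"
    have d: "d1 \<in> D" "d2 \<in> D" "d3 \<in> D" using abc unfolding S_D_def d1_def d2_def d3_def by auto
    obtain a' where a': "a = d1 * a'" "coprime a' n"
      using coprime_part[OF assms(1) d1_def[symmetric] Dr[OF d(1)]] by blast
    obtain b' where b': "b = d2 * b'" "coprime b' n"
      using coprime_part[OF assms(1) d2_def[symmetric] Dr[OF d(2)]] by blast
    have "d3 = gcd (a*b) n" using abc(4) assms(1) unfolding d3_def by (metis gcd_mod_left not_gr0)
    also have "a * b = (a' * b') * (d1 * d2)" using a' b' by (simp add: ac_simps)
    also have "gcd \<dots> n = gcd (d1 * d2) n"
      by (rule gcd_mult_left_left_cancel) (use a' b' in \<open>simp add: ac_simps\<close>)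
    finally have "gcd (d1*d2) n = d3" by simp
    hence "d1 * d2 = d3" using final_step[OF assms(1) _ Dr[OF d(3)] Dn[OF d(1)] Dn[OF d(2)]
        Dpos[OF d(1)] Dpos[OF d(2)]] by blast
    thus False using pf d by blast
  qed
  have finD: "finite D"
  proof (rule finite_subset)
    show "D \<subseteq> {d. d dvd n}" using Dn by auto
    show "finite {d. d dvd n}" using assms(1) by (rule finite_divisors_nat)
  qed
  have dne: "d \<noteq> n" if "d \<in> D" for d
  proof
    assume "d = n"
    hence "n * rad n dvd n * 1" using Dr[OF that] by simp
    hence "rad n dvd 1" using assms(1) nat_mult_dvd_cancel1 by blast
    hence "n = 1" using rad_eq_1 assms(1) by simp
    hence "d = 1" using \<open>d = n\<close> by simp
    thus False using pf[of 1 1] that by simp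
  qed
  have SU: "S_D n D = (\<Union>d\<in>D. {k\<in>{0<..n}. gcd k n = d})"
  proof (intro equalityI subsetI)
    fix s assume "s \<in> S_D n D"
    hence s: "s < n" "gcd s n \<in> D" unfolding S_D_def by auto
    have "s \<noteq> 0" using s dne by (metis gcd_0_left_nat)
    thus "s \<in> (\<Union>d\<in>D. {k\<in>{0<..n}. gcd k n = d})" using s by auto
  next
    fix s assume "s \<in> (\<Union>d\<in>D. {k\<in>{0<..n}. gcd k n = d})"
    then obtain d where d: "d \<in> D" "0 < s" "s \<le> n" "gcd s n = d" by auto
    have "s \<noteq> n" using d dne by (metis gcd_nat.idem)
    thus "s \<in> S_D n D" unfolding S_D_def using d by auto
  qed
  have "card (S_D n D) = (\<Sum>d\<in>D. card {k\<in>{0<..n}. gcd k n = d})"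
    unfolding SU apply (rule card_UN_disjoint) apply (rule finD) apply simp apply blast done
  also have "\<dots> = (\<Sum>d\<in>D. totient (n div d))"
    by (intro sum.cong refl card_gcd_eq_totient assms(1) Dn)
  finally have c: "real (card (S_D n D)) = (\<Sum>d\<in>D. real (totient (n div d)))" by simp
  have t: "real (totient (n div d)) = real (totient n) * (1 / real d)" if "d \<in> D" for d
  proof -
    have nd: "n = d * (n div d)" using Dn[OF that] by simp
    have "d * rad n dvd d * (n div d)" using Dr[OF that] nd by simp
    hence "rad n dvd n div d" using Dpos[OF that] nat_mult_dvd_cancel1 by blast
    have ndpos: "n div d > 0" using nd assms(1) by (cases "n div d = 0") auto
    have "prime_factors (n div d) = prime_factors n"
    proof (intro equalityI subsetI)
      fix p assume "p \<in> prime_factors (n div d)"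
      moreover have "n div d dvd n" using nd by (metis dvd_triv_right)
      moreover have "prime p" "p dvd n div d" using ndpos calculation(1) by (auto simp: prime_factors_dvd)
      ultimately have "prime p" "p dvd n" by (auto intro: dvd_trans[of p "n div d" n])
      thus "p \<in> prime_factors n" using assms(1) by (auto simp: prime_factors_dvd)
    next
      fix p assume "p \<in> prime_factors n"
      hence "prime p" "p dvd n" using assms(1) by (auto simp: prime_factors_dvd)
      hence "p dvd n div d" using prime_dvd_rad assms(1) \<open>rad n dvd n div d\<close> dvd_trans by blast
      thus "p \<in> prime_factors (n div d)" using ndpos \<open>prime p\<close> by (auto simp: prime_factors_dvd)
    qed
    hence "real (totient (n div d)) = real (n div d) * (\<Prod>p\<in>prime_factors n. 1 - 1 / real p)"
      by (simp add: totient_formula2)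
    moreover have "real n = real (d * (n div d))" using nd by (rule arg_cong)
    hence "real n = real d * real (n div d)" by simp
    ultimately show ?thesis using Dpos[OF that] by (simp add: totient_formula2)
  qed
  have "real (card (S_D n D)) = real (totient n) * (\<Sum>d\<in>D. 1 / real d)"
    unfolding c sum_distrib_left by (intro sum.cong refl t)
  with part1 show ?thesis by blast
qed

end
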